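(* For every ordinal $\alpha$: if $(T_\alpha,P_\alpha)$ is consistent, then it is sound, i.e. for every $\mathcal L$-sentence $\varphi$, either $(\mathbb N,T_\alpha,P_\alpha)\not\models_{SK}\varphi\vee\neg\varphi$ or $(\mathbb N,T_\alpha,P_\alpha)\not\models_{SK}\mathscr P(\varphi)$.
   Context: Language. Let $\mathcal L_{\mathbb N}$ be the language of first-order Peano arithmetic and $\mathcal L=\mathcal L_{\mathbb N}\cup\{\mathrm T,\mathrm P\}$ with unary predicates $\mathrm T,\mathrm P$. $\mathcal L$-formulas are in Tait style: literals are $s=t$, $s\neq t$, $\mathrm Tt$, $\neg\mathrm Tt$, $\mathrm Pt$, $\neg\mathrm Pt$; formulas are built from literals by $\wedge,\vee,\forall,\exists$; negation of an arbitrary formula is defined by De Morgan dualities with $\neg\neg\varphi:=\varphi$. A standard Gödel numbering is fixed; $\#e$ is the code of $e$, $\ulcorner e\urcorner$ the numeral of $\#e$, $\mathrm{val}(t)$ the value of a closed term $t$, $\dot\neg$ the primitive recursive function with $\dot\neg(\#\varphi)=\#\neg\varphi$; $\mathrm T\varphi,\mathrm P\varphi$ abbreviate $\mathrm T\ulcorner\varphi\urcorner,\mathrm P\ulcorner\varphi\urcorner$. Semantics. A partial model is $(\mathbb N,T,P)$ with $\mathbb N$ the standard model and $T=(T^+,T^-)$, $P=(P^+,P^-)$ pairs of subsets of $\omega$. Strong Kleene satisfaction $\models_{SK}$: arithmetic literals evaluated in $\mathbb N$; $\mathrm Tt$ satisfied iff $\mathrm{val}(t)\in T^+$, $\neg\mathrm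 Tt$ iff $\mathrm{val}(t)\in T^-$, likewise for $\mathrm P$ with $P^\pm$; conjunction iff both, disjunction iff at least one, $\forall x\varphi(x)$ iff all numeral instances, $\exists x\varphi(x)$ iff some numeral instance. $(T,P)$ is consistent iff $T^+\cap T^-=\emptyset$ and $P^+\cap P^-=\emptyset$. Base paradoxicality. $\mathrm{PA}[\mathrm{SK}]$ is the two-sided sequent calculus for Strong Kleene logic with identity in $\mathcal L$ (initial sequents $\varphi\Rightarrow\varphi$, cut, weakening, the rule from $\Gamma\Rightarrow\Delta,\varphi$ infer $\neg\varphi,\Gamma\Rightarrow\Delta$, usual rules for $\wedge,\vee,\forall,\exists$, reflexivity $\Rightarrow t=t$, replacement from $\Gamma\Rightarrow\Delta,\varphi(t)$ infer $\Gamma\Rightarrow\Delta,s\neq t,\varphi(s)$) plus the initial sequents of Peano arithmetic and the induction rule for all $\mathcal L$-formulas. A sentence $\varphi$ is base paradoxical iff $\mathrm{PA}[\mathrm{SK}]$ derives $\varphi\Leftrightarrow\neg\mathrm T\varphi$ and $\neg\varphi\Leftrightarrow\mathrm T\varphi$ ($\Leftrightarrow$ meaning both sequents). $B(x)$ is an $\mathcal L_{\mathbb N}$-formula defining in $\mathbb N$ the set of codes of base paradoxical sentences, and $\Pi(x):=B(x)\vee B(\dot\neg x)$. Jump and sequence. Let $\mathscr P(x)$ be the $\mathcal L$-formula which is the disjunction of: (1) $x$ codes a sentence and $\Pi(x)$; (2) $x$ codes a sentence $\mathrm Tt$ ($t$ a closed term) and $\mathrm P(\mathrm{val}(t))$;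 (3) $x$ codes a sentence $\neg\mathrm Tt$ and $\mathrm P(\mathrm{val}(t))$; (4) $x$ codes a sentence $\psi\wedge\theta$ and $(\mathrm P\psi\wedge\mathrm P\theta)\vee(\mathrm T\psi\wedge\mathrm P\theta)\vee(\mathrm T\theta\wedge\mathrm P\psi)$; (5) $x$ codes a sentence $\psi\vee\theta$ and $(\mathrm P\psi\wedge\mathrm P\theta)\vee(\neg\mathrm T\psi\wedge\mathrm P\theta)\vee(\neg\mathrm T\theta\wedge\mathrm P\psi)$; (6) $x$ codes a sentence $\forall v\psi$ and $\exists y\,\mathrm P\psi(\dot y)\wedge\forall y(\mathrm P\psi(\dot y)\vee\mathrm T\psi(\dot y))$; (7) $x$ codes a sentence $\exists v\psi$ and $\exists y\,\mathrm P\psi(\dot y)\wedge\forall y(\mathrm P\psi(\dot y)\vee\neg\mathrm T\psi(\dot y))$; here $\psi(\dot y)$ is the code of the result of substituting the numeral of $y$ for $v$. Write $\mathscr P(\varphi)$ for $\mathscr P(\ulcorner\varphi\urcorner)$. Define $\Gamma_{\mathscr{TP}}(T,P)=\big((\{\#\varphi:(\mathbb N,T,P)\models_{SK}\varphi\},\{\#\varphi:(\mathbb N,T,P)\models_{SK}\neg\varphi\}),(\{\#\varphi:(\mathbb N,T,P)\models_{SK}\mathscr P(\varphi)\},\{\#\varphi:(\mathbb N,T,P)\models_{SK}\varphi\vee\neg\varphi\})\big)$, $\varphi$ ranging over $\mathcal L$-sentences. Define $(T_0,P_0)=((\emptyset,\emptyset),(\emptyset,\emptyset))$, $(T_{\beta+1},P_{\beta+1})=\Gamma_{\mathscr{TP}}(T_\beta,P_\beta)$,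 $(T_\lambda,P_\lambda)=\bigcup_{\beta<\lambda}(T_\beta,P_\beta)$ (componentwise union) for limit $\lambda$. *)

theory Defs
  imports Main "HOL-Library.Nat_Bijection"
begin

section \<open>Syntax of L = L_N + {T, P} in Tait style\<close>

datatype tm = Var nat | Zero | Sc tm | Plus tm tm | Times tm tm

datatype fm =
    Eq tm tm | Neq tm tm
  | Tr tm | NTr tm
  | Pr tm | NPr tm
  | And fm fm | Or fm fm
  | All nat fm | Ex nat fm

primrec tvars :: "tm \<Rightarrow> nat set" where
  "tvars (Var n) = {n}"
| "tvars Zero = {}"
| "tvars (Sc t) = tvars t"
| "tvars (Plus s t) = tvars s \<union> tvars t"
| "tvars (Times s t) = tvars s \<union> tvars t"

primrec fv :: "fm \<Rightarrow> nat set" where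
  "fv (Eq s t) = tvars s \<union> tvars t"
| "fv (Neq s t) = tvars s \<union> tvars t"
| "fv (Tr t) = tvars t"
| "fv (NTr t) = tvars t"
| "fv (Pr t) = tvars t"
| "fv (NPr t) = tvars t"
| "fv (And a b) = fv a \<union> fv b"
| "fv (Or a b) = fv a \<union> fv b"
| "fv (All x a) = fv a - {x}"
| "fv (Ex x a) = fv a - {x}"

definition sentence :: "fm \<Rightarrow> bool" where
  "sentence \<phi> \<longleftrightarrow> fv \<phi> = {}"

definition fvs :: "fm set \<Rightarrow> nat set" where
  "fvs \<Gamma> = (\<Union>\<phi>\<in>\<Gamma>. fv \<phi>)"

primrec neg :: "fm \<Rightarrow> fm" where
  "neg (Eq s t) = Neq s t"
| "neg (Neq s t) = Eq s t"
| "neg (Tr t) = NTr t"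
| "neg (NTr t) = Tr t"
| "neg (Pr t) = NPr t"
| "neg (NPr t) = Pr t"
| "neg (And a b) = Or (neg a) (neg b)"
| "neg (Or a b) = And (neg a) (neg b)"
| "neg (All x a) = Ex x (neg a)"
| "neg (Ex x a) = All x (neg a)"

primrec tsubst :: "tm \<Rightarrow> nat \<Rightarrow> tm \<Rightarrow> tm" where
  "tsubst (Var n) x u = (if n = x then u else Var n)"
| "tsubst Zero x u = Zero"
| "tsubst (Sc t) x u = Sc (tsubst t x u)"
| "tsubst (Plus s t) x u = Plus (tsubst s x u) (tsubst t x u)"
| "tsubst (Times s t) x u = Times (tsubst s x u) (tsubst t x u)"

primrec subst :: "fm \<Rightarrow> nat \<Rightarrow> tm \<Rightarrow> fm" where
  "subst (Eq s t) x u = Eq (tsubst s x u) (tsubst t x u)"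
| "subst (Neq s t) x u = Neq (tsubst s x u) (tsubst t x u)"
| "subst (Tr t) x u = Tr (tsubst t x u)"
| "subst (NTr t) x u = NTr (tsubst t x u)"
| "subst (Pr t) x u = Pr (tsubst t x u)"
| "subst (NPr t) x u = NPr (tsubst t x u)"
| "subst (And a b) x u = And (subst a x u) (subst b x u)"
| "subst (Or a b) x u = Or (subst a x u) (subst b x u)"
| "subst (All y a) x u = (if y = x then All y a else All y (subst a x u))"
| "subst (Ex y a) x u = (if y = x then Ex y a else Ex y (subst a x u))"

primrec freefor :: "tm \<Rightarrow> nat \<Rightarrow> fm \<Rightarrow> bool" where
  "freefor u x (Eq s t) = True"
| "freefor u x (Neq s t) = True"
| "freefor u x (Tr t) = True"
| "freefor u x (NTr t) = True"
| "freefor u x (Pr t) = True"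
| "freefor u x (NPr t) = True"
| "freefor u x (And a b) = (freefor u x a \<and> freefor u x b)"
| "freefor u x (Or a b) = (freefor u x a \<and> freefor u x b)"
| "freefor u x (All y a) = (x \<notin> fv (All y a) \<or> (y \<notin> tvars u \<and> freefor u x a))"
| "freefor u x (Ex y a) = (x \<notin> fv (Ex y a) \<or> (y \<notin> tvars u \<and> freefor u x a))"

primrec num :: "nat \<Rightarrow> tm" where
  "num 0 = Zero"
| "num (Suc n) = Sc (num n)"

primrec tcode :: "tm \<Rightarrow> nat" where
  "tcode (Var n) = prod_encode (0, n)"
| "tcode Zero = prod_encode (1, 0)"
| "tcode (Sc t) = prod_encode (2, tcode t)"
| "tcode (Plus s t) = prod_encode (3, prod_encode (tcode s, tcode t))"
| "tcode (Times s t) = prod_encode (4, prod_encode (tcode s, tcode t))"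

primrec code :: "fm \<Rightarrow> nat" where
  "code (Eq s t) = prod_encode (0, prod_encode (tcode s, tcode t))"
| "code (Neq s t) = prod_encode (1, prod_encode (tcode s, tcode t))"
| "code (Tr t) = prod_encode (2, tcode t)"
| "code (NTr t) = prod_encode (3, tcode t)"
| "code (Pr t) = prod_encode (4, tcode t)"
| "code (NPr t) = prod_encode (5, tcode t)"
| "code (And a b) = prod_encode (6, prod_encode (code a, code b))"
| "code (Or a b) = prod_encode (7, prod_encode (code a, code b))"
| "code (All x a) = prod_encode (8, prod_encode (x, code a))"
| "code (Ex x a) = prod_encode (9, prod_encode (x, code a))"

abbreviation quote :: "fm \<Rightarrow> tm" where
  "quote \<phi> \<equiv> num (code \<phi>)"

section \<open>Strong Kleene semantics over the standard model\<close>

primrec tval :: "(nat \<Rightarrow> nat) \<Rightarrow> tm \<Rightarrow> nat" where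
  "tval e (Var n) = e n"
| "tval e Zero = 0"
| "tval e (Sc t) = Suc (tval e t)"
| "tval e (Plus s t) = tval e s + tval e t"
| "tval e (Times s t) = tval e s * tval e t"

text \<open>A pair (X+, X-) of subsets of omega interprets a predicate partially.\<close>
type_synonym pinterp = "nat set \<times> nat set"

primrec satSK :: "pinterp \<Rightarrow> pinterp \<Rightarrow> (nat \<Rightarrow> nat) \<Rightarrow> fm \<Rightarrow> bool" where
  "satSK T P e (Eq s t) = (tval e s = tval e t)"
| "satSK T P e (Neq s t) = (tval e s \<noteq> tval e t)"
| "satSK T P e (Tr t) = (tval e t \<in> fst T)"
| "satSK T P e (NTr t) = (tval e t \<in> snd T)"
| "satSK T P e (Pr t) = (tval e t \<in> fst P)"
| "satSK T P e (NPr t) = (tval e t \<in> snd P)"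
| "satSK T P e (And a b) = (satSK T P e a \<and> satSK T P e b)"
| "satSK T P e (Or a b) = (satSK T P e a \<or> satSK T P e b)"
| "satSK T P e (All x a) = (\<forall>n. satSK T P (e(x := n)) a)"
| "satSK T P e (Ex x a) = (\<exists>n. satSK T P (e(x := n)) a)"

text \<open>(N,T,P) |=_SK phi, for sentences phi (the assignment is irrelevant).\<close>
definition modelsSK :: "pinterp \<Rightarrow> pinterp \<Rightarrow> fm \<Rightarrow> bool" where
  "modelsSK T P \<phi> \<longleftrightarrow> satSK T P (\<lambda>_. 0) \<phi>"

inductive PASK :: "fm set \<Rightarrow> fm set \<Rightarrow> bool" where
  init: "PASK {\<phi>} {\<phi>}"
| weak: "PASK \<Gamma> \<Delta> \<Longrightarrow> finite \<Gamma>' \<Longrightarrow> finite \<Delta>' \<Longrightarrow> PASK (\<Gamma> \<union> \<Gamma>') (\<Delta> \<union> \<Delta>')"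
| cut: "PASK \<Gamma> (insert \<phi> \<Delta>) \<Longrightarrow> PASK (insert \<phi> \<Gamma>) \<Delta> \<Longrightarrow> PASK \<Gamma> \<Delta>"
| negL: "PASK \<Gamma> (insert \<phi> \<Delta>) \<Longrightarrow> PASK (insert (neg \<phi>) \<Gamma>) \<Delta>"
| andL: "PASK (insert \<phi> (insert \<psi> \<Gamma>)) \<Delta> \<Longrightarrow> PASK (insert (And \<phi> \<psi>) \<Gamma>) \<Delta>"
| andR: "PASK \<Gamma> (insert \<phi> \<Delta>) \<Longrightarrow> PASK \<Gamma> (insert \<psi> \<Delta>) \<Longrightarrow> PASK \<Gamma> (insert (And \<phi> \<psi>) \<Delta>)"
| orL: "PASK (insert \<phi> \<Gamma>) \<Delta> \<Longrightarrow> PASK (insert \<psi> \<Gamma>) \<Delta> \<Longrightarrow> PASK (insert (Or \<phi> \<psi>) \<Gamma>) \<Delta>"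
| orR: "PASK \<Gamma> (insert \<phi> (insert \<psi> \<Delta>)) \<Longrightarrow> PASK \<Gamma> (insert (Or \<phi> \<psi>) \<Delta>)"
| allL: "freefor t x \<phi> \<Longrightarrow> PASK (insert (subst \<phi> x t) \<Gamma>) \<Delta> \<Longrightarrow> PASK (insert (All x \<phi>) \<Gamma>) \<Delta>"
| allR: "freefor (Var y) x \<phi> \<Longrightarrow> y \<notin> fvs \<Gamma> \<union> fvs \<Delta> \<union> fv (All x \<phi>) \<Longrightarrow>
         PASK \<Gamma> (insert (subst \<phi> x (Var y)) \<Delta>) \<Longrightarrow> PASK \<Gamma> (insert (All x \<phi>) \<Delta>)"
| exL: "freefor (Var y) x \<phi> \<Longrightarrow> y \<notin> fvs \<Gamma> \<union> fvs \<Delta> \<union> fv (Ex x \<phi>) \<Longrightarrow>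
         PASK (insert (subst \<phi> x (Var y)) \<Gamma>) \<Delta> \<Longrightarrow> PASK (insert (Ex x \<phi>) \<Gamma>) \<Delta>"
| exR: "freefor t x \<phi> \<Longrightarrow> PASK \<Gamma> (insert (subst \<phi> x t) \<Delta>) \<Longrightarrow> PASK \<Gamma> (insert (Ex x \<phi>) \<Delta>)"
| refl: "PASK {} {Eq t t}"
| repl: "freefor s x \<phi> \<Longrightarrow> freefor t x \<phi> \<Longrightarrow> PASK \<Gamma> (insert (subst \<phi> x t) \<Delta>) \<Longrightarrow>
         PASK \<Gamma> (insert (Neq s t) (insert (subst \<phi> x s) \<Delta>))"
| pa_succ_ne_zero: "PASK {} {Neq (Sc s) Zero}"
| pa_succ_inj: "PASK {Eq (Sc s) (Sc t)} {Eq s t}"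
| pa_plus_zero: "PASK {} {Eq (Plus s Zero) s}"
| pa_plus_succ: "PASK {} {Eq (Plus s (Sc t)) (Sc (Plus s t))}"
| pa_times_zero: "PASK {} {Eq (Times s Zero) Zero}"
| pa_times_succ: "PASK {} {Eq (Times s (Sc t)) (Plus (Times s t) s)}"
| pa_eq_lem: "PASK {} {Eq s t, Neq s t}"
| ind: "x \<notin> fvs \<Gamma> \<union> fvs \<Delta> \<Longrightarrow> freefor (Sc (Var x)) x \<phi> \<Longrightarrow> freefor t x \<phi> \<Longrightarrow>
        PASK (insert \<phi> \<Gamma>) (insert (subst \<phi> x (Sc (Var x))) \<Delta>) \<Longrightarrow>
        PASK (insert (subst \<phi> x Zero) \<Gamma>) (insert (subst \<phi> x t) \<Delta>)"

definition PASK_iff :: "fm \<Rightarrow> fm \<Rightarrow> bool" where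
  "PASK_iff \<phi> \<psi> \<longleftrightarrow> PASK {\<phi>} {\<psi>} \<and> PASK {\<psi>} {\<phi>}"

definition base_paradoxical :: "fm \<Rightarrow> bool" where
  "base_paradoxical \<phi> \<longleftrightarrow> sentence \<phi> \<and>
     PASK_iff \<phi> (NTr (quote \<phi>)) \<and> PASK_iff (neg \<phi>) (Tr (quote \<phi>))"

text \<open>The set of codes defined in N by the arithmetical formula B(x).\<close>
definition Bset :: "nat set" where
  "Bset = {code \<phi> | \<phi>. base_paradoxical \<phi>}"

text \<open>Arithmetical parts of calP are evaluated in N (SK agrees with classical truth on
  L_N); the atomic P/T parts are evaluated via the partial extensions. Since the Goedel
  numbering is injective, "x codes psi /\ theta" means the sentence is literally And psi theta.\<close>
definition calP_sat :: "pinterp \<Rightarrow> pinterp \<Rightarrow> fm \<Rightarrow> bool" where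
  "calP_sat T P \<phi> \<longleftrightarrow>
     (sentence \<phi> \<and> (code \<phi> \<in> Bset \<or> code (neg \<phi>) \<in> Bset)) \<or>
     (\<exists>t. sentence \<phi> \<and> \<phi> = Tr t \<and> tval (\<lambda>_. 0) t \<in> fst P) \<or>
     (\<exists>t. sentence \<phi> \<and> \<phi> = NTr t \<and> tval (\<lambda>_. 0) t \<in> fst P) \<or>
     (\<exists>\<psi> \<theta>. sentence \<phi> \<and> \<phi> = And \<psi> \<theta> \<and>
        ((code \<psi> \<in> fst P \<and> code \<theta> \<in> fst P) \<or> (code \<psi> \<in> fst T \<and> code \<theta> \<in> fst P)
         \<or> (code \<theta> \<in> fst T \<and> code \<psi> \<in> fst P))) \<or>
     (\<exists>\<psi> \<theta>. sentence \<phi> \<and> \<phi> = Or \<psi> \<theta> \<and>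
        ((code \<psi> \<in> fst P \<and> code \<theta> \<in> fst P) \<or> (code \<psi> \<in> snd T \<and> code \<theta> \<in> fst P)
         \<or> (code \<theta> \<in> snd T \<and> code \<psi> \<in> fst P))) \<or>
     (\<exists>v \<psi>. sentence \<phi> \<and> \<phi> = All v \<psi> \<and>
        (\<exists>y. code (subst \<psi> v (num y)) \<in> fst P) \<and>
        (\<forall>y. code (subst \<psi> v (num y)) \<in> fst P \<or> code (subst \<psi> v (num y)) \<in> fst T)) \<or>
     (\<exists>v \<psi>. sentence \<phi> \<and> \<phi> = Ex v \<psi> \<and>
        (\<exists>y. code (subst \<psi> v (num y)) \<in> fst P) \<and>
        (\<forall>y. code (subst \<psi> v (num y)) \<in> fst P \<or> code (subst \<psi> v (num y)) \<in> snd T))"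

type_synonym state = "pinterp \<times> pinterp"

definition jumpTP :: "state \<Rightarrow> state" where
  "jumpTP S = (let T = fst S; P = snd S in
     (({code \<phi> | \<phi>. sentence \<phi> \<and> modelsSK T P \<phi>},
       {code \<phi> | \<phi>. sentence \<phi> \<and> modelsSK T P (neg \<phi>)}),
      ({code \<phi> | \<phi>. sentence \<phi> \<and> calP_sat T P \<phi>},
       {code \<phi> | \<phi>. sentence \<phi> \<and> modelsSK T P (Or \<phi> (neg \<phi>))})))"

definition state_Union :: "state set \<Rightarrow> state" where
  "state_Union A = (((\<Union>S\<in>A. fst (fst S)), (\<Union>S\<in>A. snd (fst S))),
                    ((\<Union>S\<in>A. fst (snd S)), (\<Union>S\<in>A. snd (snd S))))"

definition empty_state :: state where
  "empty_state = (({}, {}), ({}, {}))"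

text \<open>Ordinals are represented as elements of well-ordered types: a has no predecessor
  (stage 0), a largest predecessor b (successor stage b+1), or is a limit.\<close>
definition stage_step :: "('a::wellorder \<Rightarrow> state) \<Rightarrow> 'a \<Rightarrow> state" where
  "stage_step f a =
     (if \<not> (\<exists>b. b < a) then empty_state
      else if (\<exists>b. b < a \<and> (\<forall>c. c < a \<longrightarrow> c \<le> b)) then jumpTP (f (GREATEST b. b < a))
      else state_Union (f ` {b. b < a}))"

definition stage :: "'a::wellorder \<Rightarrow> state" where
  "stage = wfrec {(x, y). x < y} stage_step"

definition consistent :: "state \<Rightarrow> bool" where
  "consistent S \<longleftrightarrow> fst (fst S) \<inter> snd (fst S) = {} \<and> fst (snd S) \<inter> snd (snd S) = {}"

end

theory Submission
  imports Defs
begin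

lemma wf_lt: "wf {(x, y). x < (y::'a::wellorder)}"
  by (rule wf)

lemma stage_eq: "stage a = stage_step stage a"
proof -
  have "stage a = stage_step (cut stage {(x, y). x < y} a) a"
    by (rule def_wfrec[OF eq_reflection[OF stage_def] wf_lt])
  also have "\<dots> = stage_step stage a"
  proof -
    have G: "(\<exists>b. b < a \<and> (\<forall>c. c < a \<longrightarrow> c \<le> b)) \<Longrightarrow> (GREATEST b. b < a) < a"
      by (metis (mono_tags, lifting) GreatestI2_order)
    show ?thesis unfolding stage_step_def using G
      by (auto simp: cut_apply intro!: image_cong)
  qed
  finally show ?thesis .
qed

lemma stage_zero: "\<not> (\<exists>b. b < a) \<Longrightarrow> stage a = empty_state"
  by (subst stage_eq) (simp add: stage_step_def)

lemma stage_succ: "b < a \<Longrightarrow> (\<forall>c. c < a \<longrightarrow> c \<le> b) \<Longrightarrow> stage a = jumpTP (stage b)"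
proof -
  assume b: "b < a" "\<forall>c. c < a \<longrightarrow> c \<le> b"
  have "(GREATEST b. b < a) = b" using b by (intro Greatest_equality) auto
  then show ?thesis using b by (subst stage_eq) (auto simp: stage_step_def)
qed

lemma stage_lim: "b < a \<Longrightarrow> \<not> (\<exists>b. b < a \<and> (\<forall>c. c < a \<longrightarrow> c \<le> b)) \<Longrightarrow>
   stage a = state_Union (stage ` {b. b < a})"
  by (subst stage_eq) (auto simp: stage_step_def)

lemma stage_cases:
  obtains (zero) "\<not> (\<exists>b. b < a)" "stage a = empty_state"
  | (succ) b where "b < a" "\<forall>c. c < a \<longrightarrow> c \<le> b" "stage a = jumpTP (stage b)"
  | (lim) b where "b < a" "\<not> (\<exists>b. b < a \<and> (\<forall>c. c < a \<longrightarrow> c \<le> b))"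
       "stage a = state_Union (stage ` {b. b < a})"
  using stage_zero stage_succ stage_lim by metis

lemma tval_num[simp]: "tval e (num n) = n"
  by (induction n) auto

lemma tvars_num[simp]: "tvars (num n) = {}"
  by (induction n) auto

lemma neg_neg[simp]: "neg (neg \<phi>) = \<phi>"
  by (induction \<phi>) auto

lemma fv_neg[simp]: "fv (neg \<phi>) = fv \<phi>"
  by (induction \<phi>) auto

lemma tcode_inj: "tcode s = tcode t \<Longrightarrow> s = t"
  by (induction s arbitrary: t; case_tac t; simp add: prod_encode_eq)

lemma code_inj: "code \<phi> = code \<psi> \<Longrightarrow> \<phi> = \<psi>"
  by (induction \<phi> arbitrary: \<psi>; case_tac \<psi>; auto simp add: prod_encode_eq dest: tcode_inj)

lemma tvars_tsubst_closed: "tvars u = {} \<Longrightarrow> tvars (tsubst s x u) = tvars s - {x}"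
  by (induction s) auto

lemma fv_subst_closed: "tvars u = {} \<Longrightarrow> fv (subst \<phi> x u) = fv \<phi> - {x}"
  by (induction \<phi>) (auto simp: tvars_tsubst_closed)

lemma sentence_subst_num: "sentence (All v \<psi>) \<Longrightarrow> sentence (subst \<psi> v (num n))"
  by (simp add: sentence_def fv_subst_closed)

lemma sentence_subst_num': "sentence (Ex v \<psi>) \<Longrightarrow> sentence (subst \<psi> v (num n))"
  by (simp add: sentence_def fv_subst_closed)

lemma freefor_closed: "tvars u = {} \<Longrightarrow> freefor u x \<phi>"
  by (induction \<phi>) auto

lemma tsubst_nv: "x \<notin> tvars s \<Longrightarrow> tsubst s x u = s"
  by (induction s) auto

lemma subst_notfree: "x \<notin> fv \<phi> \<Longrightarrow> subst \<phi> x u = \<phi>"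
  by (induction \<phi>) (auto simp: tsubst_nv)

lemma tval_coinc: "(\<forall>v\<in>tvars s. e v = e' v) \<Longrightarrow> tval e s = tval e' s"
  by (induction s) auto

lemma sat_coinc: "(\<forall>v\<in>fv \<phi>. e v = e' v) \<Longrightarrow> satSK T P e \<phi> = satSK T P e' \<phi>"
proof (induction \<phi> arbitrary: e e')
  case (All x a)
  have "\<And>n. satSK T P (e(x:=n)) a = satSK T P (e'(x:=n)) a"
    using All by (intro All.IH) auto
  then show ?case by simp
next
  case (Ex x a)
  have "\<And>n. satSK T P (e(x:=n)) a = satSK T P (e'(x:=n)) a"
    using Ex by (intro Ex.IH) auto
  then show ?case by simp
next
  case (Eq s t) then show ?case using tval_coinc[of s e e'] tval_coinc[of t e e'] by auto
next
  case (Neq s t) then show ?case using tval_coinc[of s e e'] tval_coinc[of t e e'] by auto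
next
  case (Tr t) then show ?case using tval_coinc[of t e e'] by auto
next
  case (NTr t) then show ?case using tval_coinc[of t e e'] by auto
next
  case (Pr t) then show ?case using tval_coinc[of t e e'] by auto
next
  case (NPr t) then show ?case using tval_coinc[of t e e'] by auto
next
  case (And a b)
  have "satSK T P e a = satSK T P e' a" using And.prems by (intro And.IH) auto
  moreover have "satSK T P e b = satSK T P e' b" using And.prems by (intro And.IH) auto
  ultimately show ?case by simp
next
  case (Or a b)
  have "satSK T P e a = satSK T P e' a" using Or.prems by (intro Or.IH) auto
  moreover have "satSK T P e b = satSK T P e' b" using Or.prems by (intro Or.IH) auto
  ultimately show ?case by simp
qed

lemma tval_tsubst: "tval e (tsubst s x u) = tval (e(x := tval e u)) s"
  by (induction s) auto

lemma sat_subst: "freefor u x \<phi> \<Longrightarrow> satSK T P e (subst \<phi> x u) = satSK T P (e(x := tval e u)) \<phi>"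
proof (induction \<phi> arbitrary: e)
  case (All y a)
  show ?case
  proof (cases "y = x")
    case True then show ?thesis by (simp del: fun_upd_apply)
  next
    case False
    show ?thesis
    proof (cases "x \<in> fv (All y a)")
      case nf: False
      then have "x \<notin> fv a" using False by auto
      then have "\<And>n. satSK T P (e(y:=n)) a = satSK T P (e(x := tval e u, y:=n)) a"
        by (intro sat_coinc) auto
      then show ?thesis using False \<open>x \<notin> fv a\<close> by (simp add: subst_notfree del: fun_upd_apply)
    next
      case True
      then have h: "y \<notin> tvars u" "freefor u x a" using All.prems by auto
      have tu: "\<And>n. tval (e(y:=n)) u = tval e u" using h(1) by (intro tval_coinc) auto
      have eq: "satSK T P (e(y:=n)) (subst a x u) = satSK T P (e(x := tval e u, y:=n)) a" for n
      proof -
        have "satSK T P (e(y:=n)) (subst a x u) = satSK T P ((e(y:=n))(x := tval (e(y:=n)) u)) a"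
          by (rule All.IH[OF h(2)])
        also have "\<dots> = satSK T P (e(x := tval e u, y:=n)) a"
          using tu False by (metis fun_upd_twist)
        finally show ?thesis .
      qed
      show ?thesis using False by (simp add: eq del: fun_upd_apply)
    qed
  qed
next
  case (Ex y a)
  show ?case
  proof (cases "y = x")
    case True then show ?thesis by (simp del: fun_upd_apply)
  next
    case False
    show ?thesis
    proof (cases "x \<in> fv (Ex y a)")
      case nf: False
      then have "x \<notin> fv a" using False by auto
      then have "\<And>n. satSK T P (e(y:=n)) a = satSK T P (e(x := tval e u, y:=n)) a"
        by (intro sat_coinc) auto
      then show ?thesis using False \<open>x \<notin> fv a\<close> by (simp add: subst_notfree del: fun_upd_apply)
    next
      case True
      then have h: "y \<notin> tvars u" "freefor u x a" using Ex.prems by auto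
      have tu: "\<And>n. tval (e(y:=n)) u = tval e u" using h(1) by (intro tval_coinc) auto
      have eq: "satSK T P (e(y:=n)) (subst a x u) = satSK T P (e(x := tval e u, y:=n)) a" for n
      proof -
        have "satSK T P (e(y:=n)) (subst a x u) = satSK T P ((e(y:=n))(x := tval (e(y:=n)) u)) a"
          by (rule Ex.IH[OF h(2)])
        also have "\<dots> = satSK T P (e(x := tval e u, y:=n)) a"
          using tu False by (metis fun_upd_twist)
        finally show ?thesis .
      qed
      show ?thesis using False by (simp add: eq del: fun_upd_apply)
    qed
  qed
qed (simp_all add: tval_tsubst)

lemma sat_cons: "fst T \<inter> snd T = {} \<Longrightarrow> fst P \<inter> snd P = {} \<Longrightarrow>
   \<not> (satSK T P e \<phi> \<and> satSK T P e (neg \<phi>))"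
  by (induction \<phi> arbitrary: e) auto

lemma sat_mono: "satSK T P e \<phi> \<Longrightarrow> fst T \<subseteq> fst T' \<Longrightarrow> snd T \<subseteq> snd T' \<Longrightarrow>
   fst P \<subseteq> fst P' \<Longrightarrow> snd P \<subseteq> snd P' \<Longrightarrow> satSK T' P' e \<phi>"
  by (induction \<phi> arbitrary: e) auto

section \<open>Soundness of PA[SK] in consistent partial models\<close>

lemma fvs_notin: "y \<notin> fvs \<Gamma> \<Longrightarrow> \<phi> \<in> \<Gamma> \<Longrightarrow> y \<notin> fv \<phi>"
  by (auto simp: fvs_def)

lemma sat_upd_all: "y \<notin> fvs \<Gamma> \<Longrightarrow> \<forall>\<phi>\<in>\<Gamma>. satSK T P e \<phi> \<Longrightarrow> \<forall>\<phi>\<in>\<Gamma>. satSK T P (e(y:=n)) \<phi>"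
proof
  fix \<phi> assume "y \<notin> fvs \<Gamma>" "\<forall>\<phi>\<in>\<Gamma>. satSK T P e \<phi>" "\<phi> \<in> \<Gamma>"
  moreover have "satSK T P (e(y:=n)) \<phi> = satSK T P e \<phi>"
    using calculation by (intro sat_coinc) (auto simp: fvs_def)
  ultimately show "satSK T P (e(y:=n)) \<phi>" by auto
qed

lemma PASK_sound:
  assumes "PASK \<Gamma> \<Delta>" "fst T \<inter> snd T = {}" "fst P \<inter> snd P = {}"
  shows "(\<forall>\<phi>\<in>\<Gamma>. satSK T P e \<phi>) \<Longrightarrow> (\<exists>\<psi>\<in>\<Delta>. satSK T P e \<psi>)"
  using assms(1)
proof (induction arbitrary: e rule: PASK.induct)
  case (negL \<Gamma> \<phi> \<Delta>)
  then show ?case using sat_cons[OF assms(2,3)] by blast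
next
  case (allL t x \<phi> \<Gamma> \<Delta>)
  then have "satSK T P e (subst \<phi> x t)" by (simp add: sat_subst)
  then show ?case using allL by auto
next
  case (exR t x \<phi> \<Gamma> \<Delta>)
  then show ?case by (auto simp: sat_subst)
next
  case (allR y x \<phi> \<Gamma> \<Delta>)
  show ?case
  proof (rule ccontr)
    assume nd: "\<not> (\<exists>\<psi>\<in>insert (All x \<phi>) \<Delta>. satSK T P e \<psi>)"
    have "satSK T P (e(x := n)) \<phi>" for n
    proof -
      let ?e = "e(y := n)"
      have G: "\<forall>\<phi>\<in>\<Gamma>. satSK T P ?e \<phi>"
        using allR.prems allR.hyps(2) by (intro sat_upd_all) auto
      have D: "\<not> (\<exists>\<psi>\<in>\<Delta>. satSK T P ?e \<psi>)"
      proof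
        assume "\<exists>\<psi>\<in>\<Delta>. satSK T P ?e \<psi>"
        then obtain \<psi> where "\<psi> \<in> \<Delta>" "satSK T P ?e \<psi>" by blast
        moreover have "satSK T P ?e \<psi> = satSK T P e \<psi>"
          using allR.hyps(2) \<open>\<psi> \<in> \<Delta>\<close> by (intro sat_coinc) (auto simp: fvs_def)
        ultimately show False using nd by auto
      qed
      have "satSK T P ?e (subst \<phi> x (Var y))" using allR.IH[OF G] D by blast
      then have "satSK T P (?e(x := n)) \<phi>" using allR.hyps(1) by (simp add: sat_subst)
      moreover have "satSK T P (?e(x := n)) \<phi> = satSK T P (e(x := n)) \<phi>"
        using allR.hyps(2) by (intro sat_coinc) auto
      ultimately show ?thesis by simp
    qed
    then show False using nd by simp
  qed
next
  case (exL y x \<phi> \<Gamma> \<Delta>)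
  then obtain n where n: "satSK T P (e(x := n)) \<phi>" by auto
  let ?e = "e(y := n)"
  have "satSK T P (?e(x := n)) \<phi> = satSK T P (e(x := n)) \<phi>"
    using exL.hyps(2) by (intro sat_coinc) auto
  then have s: "satSK T P ?e (subst \<phi> x (Var y))" using exL.hyps(1) n by (simp add: sat_subst)
  have G: "\<forall>\<phi>\<in>\<Gamma>. satSK T P ?e \<phi>"
    using exL.prems exL.hyps(2) by (intro sat_upd_all) auto
  obtain \<psi> where "\<psi> \<in> \<Delta>" "satSK T P ?e \<psi>" using exL.IH G s by auto
  moreover have "satSK T P ?e \<psi> = satSK T P e \<psi>"
    using exL.hyps(2) \<open>\<psi> \<in> \<Delta>\<close> by (intro sat_coinc) (auto simp: fvs_def)
  ultimately show ?case by auto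
next
  case (repl s x \<phi> t \<Gamma> \<Delta>)
  show ?case
  proof (cases "tval e s = tval e t")
    case True
    have "satSK T P e (subst \<phi> x s) = satSK T P e (subst \<phi> x t)"
      using repl.hyps(1,2) True by (simp add: sat_subst)
    then show ?thesis using repl.IH repl.prems by auto
  qed simp
next
  case (ind x \<Gamma> \<Delta> \<phi> t)
  show ?case
  proof (rule ccontr)
    assume nd: "\<not> (\<exists>\<psi>\<in>insert (subst \<phi> x t) \<Delta>. satSK T P e \<psi>)"
    have G: "\<forall>\<phi>\<in>\<Gamma>. satSK T P (e(x:=n)) \<phi>" for n
      using ind.prems ind.hyps(1) by (intro sat_upd_all) auto
    have D: "\<not> (\<exists>\<psi>\<in>\<Delta>. satSK T P (e(x:=n)) \<psi>)" for n
    proof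
      assume "\<exists>\<psi>\<in>\<Delta>. satSK T P (e(x:=n)) \<psi>"
      then obtain \<psi> where "\<psi> \<in> \<Delta>" "satSK T P (e(x:=n)) \<psi>" by blast
      moreover have "satSK T P (e(x:=n)) \<psi> = satSK T P e \<psi>"
        using ind.hyps(1) \<open>\<psi> \<in> \<Delta>\<close> by (intro sat_coinc) (auto simp: fvs_def)
      ultimately show False using nd by auto
    qed
    have "satSK T P (e(x:=n)) \<phi>" for n
    proof (induction n)
      case 0
      have "satSK T P e (subst \<phi> x Zero)" using ind.prems by auto
      then show ?case by (simp add: sat_subst freefor_closed del: fun_upd_apply)
    next
      case (Suc n)
      have h: "satSK T P (e(x:=n)) \<phi>" using Suc.IH by (simp add: fun_upd_def)
      have "\<forall>\<psi>\<in>insert \<phi> \<Gamma>. satSK T P (e(x:=n)) \<psi>" using G h by blast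
      then have "satSK T P (e(x:=n)) (subst \<phi> x (Sc (Var x)))" using ind.IH D by blast
      then have "satSK T P (e(x := Suc n)) \<phi>" using ind.hyps(2) by (simp add: sat_subst)
      then show ?case by (simp add: fun_upd_def)
    qed
    then have "satSK T P e (subst \<phi> x t)" using ind.hyps(3) by (simp add: sat_subst)
    then show False using nd by auto
  qed
qed auto

section \<open>Monotonicity\<close>

definition le_st :: "state \<Rightarrow> state \<Rightarrow> bool" where
  "le_st S S' \<longleftrightarrow> fst (fst S) \<subseteq> fst (fst S') \<and> snd (fst S) \<subseteq> snd (fst S') \<and>
     fst (snd S) \<subseteq> fst (snd S') \<and> snd (snd S) \<subseteq> snd (snd S')"

lemma le_st_refl[simp]: "le_st S S" by (simp add: le_st_def)

lemma le_st_trans: "le_st A B \<Longrightarrow> le_st B C \<Longrightarrow> le_st A C"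
  by (auto simp: le_st_def)

lemma calP_mono: "calP_sat T P \<phi> \<Longrightarrow> fst T \<subseteq> fst T' \<Longrightarrow> snd T \<subseteq> snd T' \<Longrightarrow>
   fst P \<subseteq> fst P' \<Longrightarrow> calP_sat T' P' \<phi>"
  unfolding calP_sat_def by (elim disjE exE conjE) (metis subsetD)+

lemma models_mono: "le_st S S' \<Longrightarrow> modelsSK (fst S) (snd S) \<phi> \<Longrightarrow> modelsSK (fst S') (snd S') \<phi>"
  unfolding modelsSK_def le_st_def by (auto elim: sat_mono)

lemma calP_mono_st: "le_st S S' \<Longrightarrow> calP_sat (fst S) (snd S) \<phi> \<Longrightarrow> calP_sat (fst S') (snd S') \<phi>"
  unfolding le_st_def by (auto elim: calP_mono)

lemma jump_mono: "le_st S S' \<Longrightarrow> le_st (jumpTP S) (jumpTP S')"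
  unfolding jumpTP_def Let_def le_st_def[of "(_, _)"]
  by (auto intro: models_mono calP_mono_st)

lemma empty_le[simp]: "le_st empty_state S" by (simp add: le_st_def empty_state_def)

lemma union_le: "\<forall>S\<in>A. le_st S J \<Longrightarrow> le_st (state_Union A) J"
  by (auto simp: le_st_def state_Union_def)

lemma stage_mono_aux:
  "(\<forall>b<a. le_st (stage b) (stage a)) \<and> le_st (stage a) (jumpTP (stage a))"
proof (induction a rule: less_induct)
  case (less a)
  show ?case
  proof (cases a rule: stage_cases)
    case zero then show ?thesis by simp
  next
    case (succ b)
    have 1: "\<forall>c<a. le_st (stage c) (stage a)"
    proof (intro allI impI)
      fix c assume "c < a"
      then have "c \<le> b" using succ by auto
      then have "le_st (stage c) (stage b)" using less succ(1)
        by (cases "c = b") auto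
      then show "le_st (stage c) (stage a)" using less succ by (metis le_st_trans)
    qed
    have "le_st (stage b) (stage a)" using 1 succ by auto
    then have "le_st (stage a) (jumpTP (stage a))" using succ(3) by (simp add: jump_mono)
    then show ?thesis using 1 by simp
  next
    case (lim b)
    have 1: "\<forall>c<a. le_st (stage c) (stage a)"
      using lim(3) by (auto simp: le_st_def state_Union_def)
    have "le_st (stage a) (jumpTP (stage a))"
    proof -
      have "le_st (stage c) (jumpTP (stage a))" if "c < a" for c
        using less[OF that] jump_mono 1 that le_st_trans by blast
      then have "\<forall>S\<in>stage ` {b. b < a}. le_st S (jumpTP (stage a))" by auto
      then have "le_st (state_Union (stage ` {b. b < a})) (jumpTP (stage a))" by (rule union_le)
      then show ?thesis using lim(3) by simp
    qed
    then show ?thesis using 1 by simp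
  qed
qed

lemma stage_mono: "b \<le> a \<Longrightarrow> le_st (stage b) (stage a)"
  using stage_mono_aux[of a] by (cases "b = a") auto

lemma jump_simps:
  "fst (fst (jumpTP S)) = {code \<phi> | \<phi>. sentence \<phi> \<and> modelsSK (fst S) (snd S) \<phi>}"
  "snd (fst (jumpTP S)) = {code \<phi> | \<phi>. sentence \<phi> \<and> modelsSK (fst S) (snd S) (neg \<phi>)}"
  "fst (snd (jumpTP S)) = {code \<phi> | \<phi>. sentence \<phi> \<and> calP_sat (fst S) (snd S) \<phi>}"
  by (simp_all add: jumpTP_def Let_def)

lemma union_simps:
  "fst (fst (state_Union A)) = (\<Union>S\<in>A. fst (fst S))"
  "snd (fst (state_Union A)) = (\<Union>S\<in>A. snd (fst S))"
  "fst (snd (state_Union A)) = (\<Union>S\<in>A. fst (snd S))"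
  "snd (snd (state_Union A)) = (\<Union>S\<in>A. snd (snd S))"
  by (simp_all add: state_Union_def)

definition inv_st :: "state \<Rightarrow> bool" where
  "inv_st S \<longleftrightarrow>
    (\<forall>c\<in>fst (fst S). \<exists>\<psi>. sentence \<psi> \<and> c = code \<psi> \<and> modelsSK (fst S) (snd S) \<psi>) \<and>
    (\<forall>c\<in>snd (fst S). \<exists>\<psi>. sentence \<psi> \<and> c = code \<psi> \<and> modelsSK (fst S) (snd S) (neg \<psi>)) \<and>
    (\<forall>c\<in>fst (snd S). \<exists>\<psi>. sentence \<psi> \<and> c = code \<psi> \<and> calP_sat (fst S) (snd S) \<psi>)"

lemma inv_jump: "le_st S (jumpTP S) \<Longrightarrow> inv_st (jumpTP S)"
proof -
  assume le: "le_st S (jumpTP S)"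
  show ?thesis unfolding inv_st_def
  proof (intro conjI ballI)
    fix c assume "c \<in> fst (fst (jumpTP S))"
    then obtain \<phi> where "c = code \<phi>" "sentence \<phi>" "modelsSK (fst S) (snd S) \<phi>"
      unfolding jump_simps by blast
    then show "\<exists>\<psi>. sentence \<psi> \<and> c = code \<psi> \<and> modelsSK (fst (jumpTP S)) (snd (jumpTP S)) \<psi>"
      using models_mono[OF le] by blast
  next
    fix c assume "c \<in> snd (fst (jumpTP S))"
    then obtain \<phi> where "c = code \<phi>" "sentence \<phi>" "modelsSK (fst S) (snd S) (neg \<phi>)"
      unfolding jump_simps by blast
    then show "\<exists>\<psi>. sentence \<psi> \<and> c = code \<psi> \<and> modelsSK (fst (jumpTP S)) (snd (jumpTP S)) (neg \<psi>)"
      using models_mono[OF le] by blast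
  next
    fix c assume "c \<in> fst (snd (jumpTP S))"
    then obtain \<phi> where "c = code \<phi>" "sentence \<phi>" "calP_sat (fst S) (snd S) \<phi>"
      unfolding jump_simps by blast
    then show "\<exists>\<psi>. sentence \<psi> \<and> c = code \<psi> \<and> calP_sat (fst (jumpTP S)) (snd (jumpTP S)) \<psi>"
      using calP_mono_st[OF le] by blast
  qed
qed

lemma inv_union:
  assumes "\<forall>S\<in>A. inv_st S \<and> le_st S U" "U = state_Union A"
  shows "inv_st U"
  unfolding inv_st_def
proof (intro conjI ballI)
  fix c assume "c \<in> fst (fst U)"
  then obtain S where S: "S \<in> A" "c \<in> fst (fst S)" using assms(2) union_simps by auto
  then obtain \<phi> where "c = code \<phi>" "sentence \<phi>" "modelsSK (fst S) (snd S) \<phi>"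
    using assms(1) unfolding inv_st_def by blast
  then show "\<exists>\<psi>. sentence \<psi> \<and> c = code \<psi> \<and> modelsSK (fst U) (snd U) \<psi>"
    using models_mono assms(1) S(1) by blast
next
  fix c assume "c \<in> snd (fst U)"
  then obtain S where S: "S \<in> A" "c \<in> snd (fst S)" using assms(2) union_simps by auto
  then obtain \<phi> where "c = code \<phi>" "sentence \<phi>" "modelsSK (fst S) (snd S) (neg \<phi>)"
    using assms(1) unfolding inv_st_def by blast
  then show "\<exists>\<psi>. sentence \<psi> \<and> c = code \<psi> \<and> modelsSK (fst U) (snd U) (neg \<psi>)"
    using models_mono assms(1) S(1) by blast
next
  fix c assume "c \<in> fst (snd U)"
  then obtain S where S: "S \<in> A" "c \<in> fst (snd S)" using assms(2) union_simps by auto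
  then obtain \<phi> where "c = code \<phi>" "sentence \<phi>" "calP_sat (fst S) (snd S) \<phi>"
    using assms(1) unfolding inv_st_def by blast
  then show "\<exists>\<psi>. sentence \<psi> \<and> c = code \<psi> \<and> calP_sat (fst U) (snd U) \<psi>"
    using calP_mono_st assms(1) S(1) by blast
qed

lemma inv_stage: "inv_st (stage a)"
proof (induction a rule: less_induct)
  case (less a)
  show ?case
  proof (cases a rule: stage_cases)
    case zero then show ?thesis by (simp add: inv_st_def empty_state_def)
  next
    case (succ b)
    have "le_st (stage b) (stage a)" using succ(1) by (intro stage_mono) simp
    then have "le_st (stage b) (jumpTP (stage b))" using succ(3) by simp
    then show ?thesis using succ(3) inv_jump by simp
  next
    case (lim b)
    have "\<forall>S\<in>stage ` {b. b < a}. inv_st S \<and> le_st S (stage a)"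
      using less stage_mono less_imp_le by blast
    then show ?thesis using lim(3) inv_union by blast
  qed
qed

primrec dp :: "fm \<Rightarrow> nat" where
  "dp (Eq s t) = 0" | "dp (Neq s t) = 0" | "dp (Tr t) = 0" | "dp (NTr t) = 0"
| "dp (Pr t) = 0" | "dp (NPr t) = 0"
| "dp (And a b) = Suc (max (dp a) (dp b))" | "dp (Or a b) = Suc (max (dp a) (dp b))"
| "dp (All x a) = Suc (dp a)" | "dp (Ex x a) = Suc (dp a)"

lemma neg_subst: "neg (subst \<phi> x u) = subst (neg \<phi>) x u"
  by (induction \<phi>) auto

lemma dp_subst[simp]: "dp (subst \<phi> x u) = dp \<phi>"
  by (induction \<phi>) auto

lemma models_simps:
  "modelsSK T P (And a b) = (modelsSK T P a \<and> modelsSK T P b)"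
  "modelsSK T P (Or a b) = (modelsSK T P a \<or> modelsSK T P b)"
  "modelsSK T P (Tr t) = (tval (\<lambda>_. 0) t \<in> fst T)"
  "modelsSK T P (NTr t) = (tval (\<lambda>_. 0) t \<in> snd T)"
  "modelsSK T P (All v \<psi>) = (\<forall>n. modelsSK T P (subst \<psi> v (num n)))"
  "modelsSK T P (Ex v \<psi>) = (\<exists>n. modelsSK T P (subst \<psi> v (num n)))"
  by (simp_all add: modelsSK_def sat_subst freefor_closed)

lemma sentence_simps:
  "sentence (And a b) = (sentence a \<and> sentence b)"
  "sentence (Or a b) = (sentence a \<and> sentence b)"
  by (auto simp: sentence_def)

lemma core:
  assumes cT: "fst T \<inter> snd T = {}" and cP: "fst P \<inter> snd P = {}"
  and I1: "\<forall>c\<in>fst T. \<exists>\<psi>. sentence \<psi> \<and> c = code \<psi> \<and> modelsSK T P \<psi>"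
  and I2: "\<forall>c\<in>snd T. \<exists>\<psi>. sentence \<psi> \<and> c = code \<psi> \<and> modelsSK T P (neg \<psi>)"
  and I3: "\<forall>c\<in>fst P. \<exists>\<psi>. sentence \<psi> \<and> c = code \<psi> \<and> calP_sat T P \<psi>"
  and D: "\<forall>c\<in>fst P. c \<notin> fst T \<and> c \<notin> snd T"
  shows "sentence \<phi> \<Longrightarrow> modelsSK T P \<phi> \<or> modelsSK T P (neg \<phi>) \<Longrightarrow> calP_sat T P \<phi> \<Longrightarrow> False"
proof (induction "dp \<phi>" arbitrary: \<phi> rule: less_induct)
  case less
  have IH: "\<And>\<psi>. dp \<psi> < dp \<phi> \<Longrightarrow> sentence \<psi> \<Longrightarrow> modelsSK T P \<psi> \<or> modelsSK T P (neg \<psi>) \<Longrightarrow>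
     calP_sat T P \<psi> \<Longrightarrow> False" using less.hyps by blast
  have nb: "\<And>\<psi>. \<not> (modelsSK T P \<psi> \<and> modelsSK T P (neg \<psi>))"
    using sat_cons[OF cT cP] by (simp add: modelsSK_def)
  have fT: "\<And>\<psi>. code \<psi> \<in> fst T \<Longrightarrow> modelsSK T P \<psi>" using I1 code_inj by metis
  have fTn: "\<And>\<psi>. code \<psi> \<in> snd T \<Longrightarrow> modelsSK T P (neg \<psi>)" using I2 code_inj by metis
  have fP: "\<And>\<psi>. code \<psi> \<in> fst P \<Longrightarrow> calP_sat T P \<psi>" using I3 code_inj by metis
  have bp: "False" if b: "base_paradoxical \<chi>" and d: "modelsSK T P \<chi> \<or> modelsSK T P (neg \<chi>)" for \<chi>
  proof -
    from b have s1: "PASK {\<chi>} {NTr (quote \<chi>)}" and s2: "PASK {neg \<chi>} {Tr (quote \<chi>)}"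
      by (auto simp: base_paradoxical_def PASK_iff_def)
    have h1: "modelsSK T P \<chi> \<Longrightarrow> code \<chi> \<in> snd T"
      using PASK_sound[OF s1 cT cP, of "\<lambda>_. 0"] by (simp add: modelsSK_def)
    have h2: "modelsSK T P (neg \<chi>) \<Longrightarrow> code \<chi> \<in> fst T"
      using PASK_sound[OF s2 cT cP, of "\<lambda>_. 0"] by (simp add: modelsSK_def)
    show False using d h1 h2 fT fTn nb by blast
  qed
  have det: "modelsSK T P \<phi> \<or> modelsSK T P (neg \<phi>)" by (rule less.prems(2))
  have sen: "sentence \<phi>" by (rule less.prems(1))
  have c1: False if "sentence \<phi> \<and> (code \<phi> \<in> Bset \<or> code (neg \<phi>) \<in> Bset)"
  proof -
    { assume "code \<phi> \<in> Bset"
      then obtain \<chi> where "base_paradoxical \<chi>" "code \<phi> = code \<chi>" by (auto simp: Bset_def)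
      then have False using bp det code_inj by metis }
    moreover
    { assume "code (neg \<phi>) \<in> Bset"
      then obtain \<chi> where "base_paradoxical \<chi>" "code (neg \<phi>) = code \<chi>" by (auto simp: Bset_def)
      then have "base_paradoxical (neg \<phi>)" using code_inj by metis
      then have False using bp det by (metis neg_neg disj_commute) }
    ultimately show False using that by blast
  qed
  have c2: False if "\<exists>t. sentence \<phi> \<and> \<phi> = Tr t \<and> tval (\<lambda>_. 0) t \<in> fst P"
    using that det D by (auto simp: models_simps)
  have c3: False if "\<exists>t. sentence \<phi> \<and> \<phi> = NTr t \<and> tval (\<lambda>_. 0) t \<in> fst P"
    using that det D by (auto simp: models_simps)
  have c4: False if hc4: "\<exists>\<psi> \<theta>. sentence \<phi> \<and> \<phi> = And \<psi> \<theta> \<and>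
        ((code \<psi> \<in> fst P \<and> code \<theta> \<in> fst P) \<or> (code \<psi> \<in> fst T \<and> code \<theta> \<in> fst P)
         \<or> (code \<theta> \<in> fst T \<and> code \<psi> \<in> fst P))"
  proof -
    obtain \<psi> \<theta> where e: "\<phi> = And \<psi> \<theta>" and c: "code \<psi> \<in> fst P \<and> code \<theta> \<in> fst P \<or>
      code \<psi> \<in> fst T \<and> code \<theta> \<in> fst P \<or> code \<theta> \<in> fst T \<and> code \<psi> \<in> fst P"
      using hc4 by blast
    have s: "sentence \<psi>" "sentence \<theta>" using sen e sentence_simps by auto
    have l: "dp \<psi> < dp \<phi>" "dp \<theta> < dp \<phi>" using e by auto
    have d: "(modelsSK T P \<psi> \<and> modelsSK T P \<theta>) \<or> modelsSK T P (neg \<psi>) \<or> modelsSK T P (neg \<theta>)"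
      using det e by (simp add: models_simps)
    show False using c d IH[OF l(1) s(1)] IH[OF l(2) s(2)] fP fT nb by blast
  qed
  have c5: False if hc5: "\<exists>\<psi> \<theta>. sentence \<phi> \<and> \<phi> = Or \<psi> \<theta> \<and>
        ((code \<psi> \<in> fst P \<and> code \<theta> \<in> fst P) \<or> (code \<psi> \<in> snd T \<and> code \<theta> \<in> fst P)
         \<or> (code \<theta> \<in> snd T \<and> code \<psi> \<in> fst P))"
  proof -
    obtain \<psi> \<theta> where e: "\<phi> = Or \<psi> \<theta>" and c: "code \<psi> \<in> fst P \<and> code \<theta> \<in> fst P \<or>
      code \<psi> \<in> snd T \<and> code \<theta> \<in> fst P \<or> code \<theta> \<in> snd T \<and> code \<psi> \<in> fst P"
      using hc5 by blast
    have s: "sentence \<psi>" "sentence \<theta>" using sen e sentence_simps by auto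
    have l: "dp \<psi> < dp \<phi>" "dp \<theta> < dp \<phi>" using e by auto
    have d: "modelsSK T P \<psi> \<or> modelsSK T P \<theta> \<or> (modelsSK T P (neg \<psi>) \<and> modelsSK T P (neg \<theta>))"
      using det e by (simp add: models_simps)
    show False using c d IH[OF l(1) s(1)] IH[OF l(2) s(2)] fP fTn nb by blast
  qed
  have c6: False if hc6: "\<exists>v \<psi>. sentence \<phi> \<and> \<phi> = All v \<psi> \<and>
        (\<exists>y. code (subst \<psi> v (num y)) \<in> fst P) \<and>
        (\<forall>y. code (subst \<psi> v (num y)) \<in> fst P \<or> code (subst \<psi> v (num y)) \<in> fst T)"
  proof -
    obtain v \<psi> y where e: "\<phi> = All v \<psi>" and y: "code (subst \<psi> v (num y)) \<in> fst P"
      and a: "\<forall>y. code (subst \<psi> v (num y)) \<in> fst P \<or> code (subst \<psi> v (num y)) \<in> fst T"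
      using hc6 by blast
    have s: "\<And>n. sentence (subst \<psi> v (num n))" using sen e sentence_subst_num by blast
    have l: "\<And>n. dp (subst \<psi> v (num n)) < dp \<phi>" using e by auto
    have d: "(\<forall>n. modelsSK T P (subst \<psi> v (num n))) \<or> (\<exists>n. modelsSK T P (neg (subst \<psi> v (num n))))"
      using det e by (simp add: models_simps neg_subst)
    show False using d
    proof
      assume "\<forall>n. modelsSK T P (subst \<psi> v (num n))"
      then show False using IH[OF l s] y fP by blast
    next
      assume "\<exists>n. modelsSK T P (neg (subst \<psi> v (num n)))"
      then obtain n where n: "modelsSK T P (neg (subst \<psi> v (num n)))" by blast
      then show False using IH[OF l s] a fP fT nb by blast
    qed
  qed
  have c7: False if hc7: "\<exists>v \<psi>. sentence \<phi> \<and> \<phi> = Ex v \<psi> \<and>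
        (\<exists>y. code (subst \<psi> v (num y)) \<in> fst P) \<and>
        (\<forall>y. code (subst \<psi> v (num y)) \<in> fst P \<or> code (subst \<psi> v (num y)) \<in> snd T)"
  proof -
    obtain v \<psi> y where e: "\<phi> = Ex v \<psi>" and y: "code (subst \<psi> v (num y)) \<in> fst P"
      and a: "\<forall>y. code (subst \<psi> v (num y)) \<in> fst P \<or> code (subst \<psi> v (num y)) \<in> snd T"
      using hc7 by blast
    have s: "\<And>n. sentence (subst \<psi> v (num n))" using sen e sentence_subst_num' by blast
    have l: "\<And>n. dp (subst \<psi> v (num n)) < dp \<phi>" using e by auto
    have d: "(\<exists>n. modelsSK T P (subst \<psi> v (num n))) \<or> (\<forall>n. modelsSK T P (neg (subst \<psi> v (num n))))"
      using det e by (simp add: models_simps neg_subst)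
    show False using d
    proof
      assume "\<forall>n. modelsSK T P (neg (subst \<psi> v (num n)))"
      then show False using IH[OF l s] y fP by blast
    next
      assume "\<exists>n. modelsSK T P (subst \<psi> v (num n))"
      then obtain n where n: "modelsSK T P (subst \<psi> v (num n))" by blast
      then show False using IH[OF l s] a fP fTn nb by blast
    qed
  qed
  show False using less.prems(3) c1 c2 c3 c4 c5 c6 c7 unfolding calP_sat_def by argo
qed

lemma cons_down: "le_st S S' \<Longrightarrow> consistent S' \<Longrightarrow> consistent S"
  by (auto simp: le_st_def consistent_def)

lemma core_st:
  assumes "consistent S" "inv_st S" "\<forall>c\<in>fst (snd S). c \<notin> fst (fst S) \<and> c \<notin> snd (fst S)"
    "sentence \<phi>" "modelsSK (fst S) (snd S) (Or \<phi> (neg \<phi>))" "calP_sat (fst S) (snd S) \<phi>"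
  shows False
  using assms core[of "fst S" "snd S" \<phi>]
  by (simp add: consistent_def inv_st_def models_simps)

lemma dis_stage: "consistent (stage a) \<Longrightarrow>
  \<forall>c\<in>fst (snd (stage a)). c \<notin> fst (fst (stage a)) \<and> c \<notin> snd (fst (stage a))"
proof (induction a rule: less_induct)
  case (less a)
  show ?case
  proof (cases a rule: stage_cases)
    case zero then show ?thesis by (simp add: empty_state_def)
  next
    case (succ b)
    have le: "le_st (stage b) (stage a)" using succ(1) by (intro stage_mono) simp
    then have cb: "consistent (stage b)" using less.prems cons_down by blast
    have db: "\<forall>c\<in>fst (snd (stage b)). c \<notin> fst (fst (stage b)) \<and> c \<notin> snd (fst (stage b))"
      using less.IH[OF succ(1) cb] .
    have "\<forall>c\<in>fst (snd (jumpTP (stage b))). c \<notin> fst (fst (jumpTP (stage b))) \<and> c \<notin> snd (fst (jumpTP (stage b)))"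
    proof (intro ballI conjI notI)
      fix c assume "c \<in> fst (snd (jumpTP (stage b)))"
      then obtain \<phi> where p: "c = code \<phi>" "sentence \<phi>" "calP_sat (fst (stage b)) (snd (stage b)) \<phi>"
        unfolding jump_simps by blast
      {
        assume "c \<in> fst (fst (jumpTP (stage b)))"
        then obtain \<psi> where "c = code \<psi>" "modelsSK (fst (stage b)) (snd (stage b)) \<psi>"
          unfolding jump_simps by blast
        then have "modelsSK (fst (stage b)) (snd (stage b)) (Or \<phi> (neg \<phi>))"
          using p code_inj by (metis models_simps(2))
        then show False using core_st[OF cb inv_stage db p(2) _ p(3)] by blast
      }
      {
        assume "c \<in> snd (fst (jumpTP (stage b)))"
        then obtain \<psi> where "c = code \<psi>" "modelsSK (fst (stage b)) (snd (stage b)) (neg \<psi>)"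
          unfolding jump_simps by blast
        then have "modelsSK (fst (stage b)) (snd (stage b)) (Or \<phi> (neg \<phi>))"
          using p code_inj by (metis models_simps(2))
        then show False using core_st[OF cb inv_stage db p(2) _ p(3)] by blast
      }
    qed
    then show ?thesis using succ(3) by simp
  next
    case (lim b)
    show ?thesis
    proof (intro ballI conjI notI)
      fix c assume "c \<in> fst (snd (stage a))"
      then obtain b1 where b1: "b1 < a" "c \<in> fst (snd (stage b1))" using lim(3) union_simps by auto
      {
        assume "c \<in> fst (fst (stage a))"
        then obtain b2 where b2: "b2 < a" "c \<in> fst (fst (stage b2))" using lim(3) union_simps by auto
        define m where "m = max b1 b2"
        have m: "m < a" "b1 \<le> m" "b2 \<le> m" using b1 b2 by (auto simp: m_def)
        have "le_st (stage b1) (stage m)" "le_st (stage b2) (stage m)" "le_st (stage m) (stage a)"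
          using m stage_mono less_imp_le by blast+
        then have "consistent (stage m)" "c \<in> fst (snd (stage m))" "c \<in> fst (fst (stage m))"
          using cons_down less.prems b1 b2 by (auto simp: le_st_def)
        then show False using less.IH[OF m(1)] by blast
      }
      {
        assume "c \<in> snd (fst (stage a))"
        then obtain b2 where b2: "b2 < a" "c \<in> snd (fst (stage b2))" using lim(3) union_simps by auto
        define m where "m = max b1 b2"
        have m: "m < a" "b1 \<le> m" "b2 \<le> m" using b1 b2 by (auto simp: m_def)
        have "le_st (stage b1) (stage m)" "le_st (stage b2) (stage m)" "le_st (stage m) (stage a)"
          using m stage_mono less_imp_le by blast+
        then have "consistent (stage m)" "c \<in> fst (snd (stage m))" "c \<in> snd (fst (stage m))"
          using cons_down less.prems b1 b2 by (auto simp: le_st_def)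
        then show False using less.IH[OF m(1)] by blast
      }
    qed
  qed
qed

theorem mainTheorem7:
  fixes \<alpha> :: "'a::wellorder"
  assumes "consistent (stage \<alpha>)"
  shows "\<forall>\<phi>. sentence \<phi> \<longrightarrow>
           \<not> modelsSK (fst (stage \<alpha>)) (snd (stage \<alpha>)) (Or \<phi> (neg \<phi>))
         \<or> \<not> calP_sat (fst (stage \<alpha>)) (snd (stage \<alpha>)) \<phi>"
  using core_st[OF assms inv_stage dis_stage[OF assms]] by blast

end
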